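(* There exist continuous functions $f_1,f_2:\mathrm{SO}(2)\to\mathbb{R}$ such that for every rotation $R\in\mathrm{SO}(2)$, at least one of $f_1(R)$ and $f_2(R)$ is a correct rotation angle of $R$, i.e. $\rho(f_1(R))=R$ or $\rho(f_2(R))=R$.
   Context: For $\theta\in\mathbb{R}$, $\rho(\theta)=\begin{bmatrix}\cos\theta&-\sin\theta\\ \sin\theta&\cos\theta\end{bmatrix}\in\mathrm{SO}(2)$ denotes the rotation of angle $\theta$. *)

theory Defs
  imports "HOL-Analysis.Analysis"
begin

definition rho :: "real \<Rightarrow> real^2^2" where
  "rho t = vector [vector [cos t, - sin t], vector [sin t, cos t]]"

definition SO2 :: "(real^2^2) set" where
  "SO2 = {R. rotation_matrix R}"

end

theory Submission
  imports Defs
begin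

lemma SO2_entries:
  assumes "R \<in> SO2"
  shows "R$2$2 = R$1$1 \<and> R$1$2 = - R$2$1 \<and> (R$1$1)^2 + (R$2$1)^2 = 1"
proof -
  let ?p = "R$1$1" and ?q = "R$1$2" and ?r = "R$2$1" and ?s = "R$2$2"
  have o: "transpose R ** R = mat 1" and d: "det R = 1"
    using assms by (auto simp: SO2_def rotation_matrix_def orthogonal_matrix)
  have e11: "?p*?p + ?r*?r = 1"
    using arg_cong[OF o, of "\<lambda>M. M$1$1"] by (simp add: matrix_matrix_mult_def sum_2 transpose_def mat_def)
  have e22: "?q*?q + ?s*?s = 1"
    using arg_cong[OF o, of "\<lambda>M. M$2$2"] by (simp add: matrix_matrix_mult_def sum_2 transpose_def mat_def)
  have dd: "?p*?s - ?q*?r = 1" using d by (simp add: det_2)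
  have "(?p - ?s)^2 + (?q + ?r)^2 = 0"
    using e11 e22 dd by (simp add: power2_eq_square algebra_simps)
  hence "?p - ?s = 0 \<and> ?q + ?r = 0" by (simp add: sum_power2_eq_zero_iff)
  thus ?thesis using e11 by (simp add: power2_eq_square)
qed

lemma mat2_eq:
  fixes A B :: "real^2^2"
  assumes "A$1$1 = B$1$1" "A$1$2 = B$1$2" "A$2$1 = B$2$1" "A$2$2 = B$2$2"
  shows "A = B"
  using assms by (simp add: vec_eq_iff forall_2)

theorem theorem4:
  shows "\<exists>f1 f2 :: real^2^2 \<Rightarrow> real.
           continuous_on SO2 f1 \<and> continuous_on SO2 f2 \<and>
           (\<forall>R\<in>SO2. rho (f1 R) = R \<or> rho (f2 R) = R)"
proof (intro exI conjI ballI)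
  have rng: "\<forall>R\<in>SO2. -1 \<le> R$1$1 \<and> R$1$1 \<le> 1"
  proof
    fix R assume "R \<in> SO2"
    then have "(R$1$1)^2 + (R$2$1)^2 = 1" using SO2_entries by blast
    then have "(R$1$1)^2 \<le> 1" by (metis le_add_same_cancel1 zero_le_power2)
    then show "-1 \<le> R$1$1 \<and> R$1$1 \<le> 1" by (metis abs_le_iff abs_square_le_1 minus_le_iff)
  qed
  show c1: "continuous_on SO2 (\<lambda>R. arccos (R$1$1))"
    by (intro continuous_on_arccos continuous_on_component continuous_on_id) (use rng in auto)
  show "continuous_on SO2 (\<lambda>R. - arccos (R$1$1))"
    using continuous_on_minus[OF c1] .
  fix R assume R: "R \<in> SO2"
  define a where "a = R$1$1"
  define b where "b = R$2$1"
  have E: "R$2$2 = a" "R$1$2 = - b" "a^2 + b^2 = 1" using SO2_entries[OF R] by (auto simp: a_def b_def)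
  have ab: "-1 \<le> a" "a \<le> 1" using rng R by (auto simp: a_def)
  have sa: "sin (arccos a) = \<bar>b\<bar>"
  proof -
    have "1 - a^2 = b^2" using E(3) by linarith
    then show ?thesis using ab by (simp add: sin_arccos)
  qed
  have ca: "cos (arccos a) = a" using ab by simp
  show "rho (arccos (R$1$1)) = R \<or> rho (- arccos (R$1$1)) = R"
  proof (cases "b \<ge> 0")
    case True
    then show ?thesis
      by (intro disjI1 mat2_eq) (auto simp: rho_def a_def[symmetric] b_def[symmetric] E(1,2) sa ca)
  next
    case False
    then show ?thesis
      by (intro disjI2 mat2_eq) (auto simp: rho_def a_def[symmetric] b_def[symmetric] E(1,2) sa ca)
  qed
qed

end
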